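(* Let $\mathcal{D}\subset\mathbb{R}^N$ be open, bounded, connected, and assume the boundary point $y_0\in\partial\mathcal{D}$ is walk-regular. Then for every continuous $F:\partial\mathcal{D}\to\mathbb{R}$, the functions $u^\epsilon(x)=\mathbb{E}[F\circ X^{\epsilon,x}]$ satisfy: for every $\eta>0$ there exist $\hat\delta>0$ and $\hat\epsilon\in(0,1)$ such that $|u^\epsilon(x_0)-F(y_0)|\le\eta$ for all $\epsilon\in(0,\hat\epsilon)$ and all $x_0\in B_{\hat\delta}(y_0)\cap\mathcal{D}$.
   Context: Probability space: $\Omega_1=B_1(0)\subset\mathbb{R}^N$ with Borel $\sigma$-algebra and normalised Lebesgue measure; $(\Omega,\mathcal{F},\mathbb{P})$ is the countable product $\Omega=(\Omega_1)^{\mathbb{N}}$, $\omega=\{w_i\}_{i\ge1}$. The $\epsilon$-ball walk started at $x\in\mathcal{D}$: $X_0^{\epsilon,x}\equiv x$, $X_n^{\epsilon,x}=X_{n-1}^{\epsilon,x}+\big(\epsilon\wedge\operatorname{dist}(X_{n-1}^{\epsilon,x},\partial\mathcal{D})\big)w_n$ for $n\ge1$; it converges $\mathbb{P}$-a.s. to a random variable $X^{\epsilon,x}:\Omega\to\partial\mathcal{D}$. A point $y_0\in\partial\mathcal{D}$ is walk-regular if for every $\eta,\delta>0$ there exist $\hat\delta\in(0,\delta)$ and $\hat\epsilon\in(0,1)$ such that $\mathbb{P}(X^{\epsilon,x_0}\in B_\delta(y_0))\ge1-\eta$ for all $\epsilon\in(0,\hat\epsilon)$ and all $x_0\in B_{\hat\delta}(y_0)\cap\mathcal{D}$.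 *)

theory Defs
  imports "HOL-Probability.Probability"
begin

definition ball_space :: "'a::euclidean_space measure" where
  "ball_space = uniform_measure lborel (ball 0 1)"

text \<open>The countable product space; omega n is the step w_(n+1).\<close>
definition walk_space :: "(nat \<Rightarrow> 'a::euclidean_space) measure" where
  "walk_space = PiM UNIV (\<lambda>_. ball_space)"

fun ball_walk :: "'a::euclidean_space set \<Rightarrow> real \<Rightarrow> 'a \<Rightarrow> (nat \<Rightarrow> 'a) \<Rightarrow> nat \<Rightarrow> 'a" where
  "ball_walk D \<epsilon> x \<omega> 0 = x"
| "ball_walk D \<epsilon> x \<omega> (Suc n) =
     ball_walk D \<epsilon> x \<omega> n + min \<epsilon> (infdist (ball_walk D \<epsilon> x \<omega> n) (frontier D)) *\<^sub>R \<omega> n"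

text \<open>It exists and lies on the boundary almost surely;
  on the remaining null set we put an arbitrary boundary point (this does not affect
  any probability or expectation).\<close>
definition walk_limit :: "'a::euclidean_space set \<Rightarrow> real \<Rightarrow> 'a \<Rightarrow> (nat \<Rightarrow> 'a) \<Rightarrow> 'a" where
  "walk_limit D \<epsilon> x \<omega> =
     (if convergent (ball_walk D \<epsilon> x \<omega>) \<and> lim (ball_walk D \<epsilon> x \<omega>) \<in> frontier D
      then lim (ball_walk D \<epsilon> x \<omega>) else (SOME y. y \<in> frontier D))"

definition walk_regular :: "'a::euclidean_space set \<Rightarrow> 'a \<Rightarrow> bool" where
  "walk_regular D y0 \<longleftrightarrow>
     (\<forall>\<eta>>0. \<forall>\<delta>>0. \<exists>\<delta>'. 0 < \<delta>' \<and> \<delta>' < \<delta> \<and> (\<exists>\<epsilon>'. 0 < \<epsilon>' \<and> \<epsilon>' < 1 \<and>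
        (\<forall>\<epsilon>. 0 < \<epsilon> \<and> \<epsilon> < \<epsilon>' \<longrightarrow> (\<forall>x0 \<in> ball y0 \<delta>' \<inter> D.
           measure walk_space {\<omega> \<in> space walk_space. walk_limit D \<epsilon> x0 \<omega> \<in> ball y0 \<delta>}
             \<ge> 1 - \<eta>))))"

definition walk_value :: "'a::euclidean_space set \<Rightarrow> ('a \<Rightarrow> real) \<Rightarrow> real \<Rightarrow> 'a \<Rightarrow> real" where
  "walk_value D F \<epsilon> x = (\<integral>\<omega>. F (walk_limit D \<epsilon> x \<omega>) \<partial>walk_space)"

end

theory Submission imports Defs begin

lemma ball_space_prob: "prob_space (ball_space :: 'a::euclidean_space measure)"
  unfolding ball_space_def
proof (rule prob_space_uniform_measure)
  have "measure lborel (ball (0::'a) 1) > 0" by (rule content_ball_pos) simp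
  then show "emeasure lborel (ball (0::'a) 1) \<noteq> 0" by (auto simp: measure_def)
  show "emeasure lborel (ball (0::'a) 1) \<noteq> \<infinity>" using emeasure_lborel_ball_finite[of 0 1] by (simp add: less_top)
qed

lemma sets_ball_space[measurable_cong]: "sets (ball_space :: 'a::euclidean_space measure) = sets borel"
  unfolding ball_space_def by simp

lemma walk_space_prob: "prob_space (walk_space :: (nat \<Rightarrow> 'a::euclidean_space) measure)"
proof -
  interpret product_prob_space "\<lambda>_. ball_space :: 'a measure" UNIV
    by (simp add: product_prob_space_def product_sigma_finite_def ball_space_prob
        prob_space_imp_sigma_finite product_prob_space_axioms_def)
  show ?thesis unfolding walk_space_def by (rule P.prob_space_axioms)
qed

lemma comp_meas: "(\<lambda>\<omega>. \<omega> n) \<in> borel_measurable (walk_space :: (nat \<Rightarrow> 'a::euclidean_space) measure)"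
proof -
  have "(\<lambda>\<omega>. \<omega> n) \<in> measurable walk_space (ball_space :: 'a measure)"
    unfolding walk_space_def by (rule measurable_component_singleton) simp
  then show ?thesis by (simp add: measurable_cong_sets[OF refl sets_ball_space])
qed

lemma walk_meas[measurable]: "(\<lambda>\<omega>. ball_walk D \<epsilon> x \<omega> n) \<in> borel_measurable (walk_space :: (nat \<Rightarrow> 'a::euclidean_space) measure)"
proof (induction n)
  case 0 then show ?case by simp
next
  case (Suc n)
  have i: "(\<lambda>\<omega>. infdist (ball_walk D \<epsilon> x \<omega> n) (frontier D)) \<in> borel_measurable walk_space"
    by (rule borel_measurable_continuous_on[OF _ Suc]) (intro continuous_at_imp_continuous_on ballI continuous_infdist continuous_ident)
  show ?case unfolding ball_walk.simps using Suc i comp_meas[of n]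
    by (intro borel_measurable_add borel_measurable_scaleR borel_measurable_min measurable_const) simp_all
qed

lemma limit_meas[measurable]: "walk_limit D \<epsilon> x \<in> borel_measurable (walk_space :: (nat \<Rightarrow> 'a::euclidean_space) measure)"
proof -
  have c: "{\<omega>\<in>space walk_space. convergent (ball_walk D \<epsilon> x \<omega>)} \<in> sets (walk_space :: (nat \<Rightarrow> 'a) measure)"
  proof -
    have "{\<omega>\<in>space walk_space. Cauchy (\<lambda>i. ball_walk D \<epsilon> x \<omega> i)} \<in> sets (walk_space :: (nat \<Rightarrow> 'a) measure)"
      by (rule sets_Collect_Cauchy) (rule walk_meas)
    then show ?thesis unfolding convergent_eq_Cauchy[symmetric] by (simp add: convergent_def)
  qed
  have l: "(\<lambda>\<omega>. lim (ball_walk D \<epsilon> x \<omega>)) \<in> borel_measurable (walk_space :: (nat \<Rightarrow> 'a) measure)"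
  proof -
    have "(\<lambda>\<omega>. lim (\<lambda>i. ball_walk D \<epsilon> x \<omega> i)) \<in> borel_measurable (walk_space :: (nat \<Rightarrow> 'a) measure)"
      by (rule borel_measurable_lim_metric) (rule walk_meas)
    then show ?thesis by simp
  qed
  have f: "{\<omega>\<in>space walk_space. lim (ball_walk D \<epsilon> x \<omega>) \<in> frontier D} \<in> sets (walk_space :: (nat \<Rightarrow> 'a) measure)"
    using measurable_sets[OF l, of "frontier D"] by (simp add: Int_def vimage_def conj_commute)
  show ?thesis unfolding walk_limit_def[abs_def]
  proof (rule measurable_If[OF l measurable_const])
    have "{\<omega>\<in>space walk_space. convergent (ball_walk D \<epsilon> x \<omega>)} \<inter> {\<omega>\<in>space walk_space. lim (ball_walk D \<epsilon> x \<omega>) \<in> frontier D} \<in> sets (walk_space :: (nat \<Rightarrow> 'a) measure)"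
      using c f by blast
    moreover have "{\<omega>\<in>space walk_space. convergent (ball_walk D \<epsilon> x \<omega>)} \<inter> {\<omega>\<in>space walk_space. lim (ball_walk D \<epsilon> x \<omega>) \<in> frontier D} = {\<omega>\<in>space walk_space. convergent (ball_walk D \<epsilon> x \<omega>) \<and> lim (ball_walk D \<epsilon> x \<omega>) \<in> frontier D}"
      by blast
    ultimately show "{\<omega>\<in>space walk_space. convergent (ball_walk D \<epsilon> x \<omega>) \<and> lim (ball_walk D \<epsilon> x \<omega>) \<in> frontier D} \<in> sets (walk_space :: (nat \<Rightarrow> 'a) measure)"
      by simp
  qed simp
qed


lemma limit_in_frontier: "y0 \<in> frontier D \<Longrightarrow> walk_limit D \<epsilon> x \<omega> \<in> frontier D"
  unfolding walk_limit_def by (auto intro: someI)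

theorem lemma2p13:
  fixes D :: "'a::euclidean_space set" and y0 :: 'a and F :: "'a \<Rightarrow> real"
  assumes "open D" and "bounded D" and "connected D"
    and "y0 \<in> frontier D" and "walk_regular D y0"
    and "continuous_on (frontier D) F"
  shows "\<forall>\<eta>>0. \<exists>\<delta>'>0. \<exists>\<epsilon>'. 0 < \<epsilon>' \<and> \<epsilon>' < 1 \<and>
           (\<forall>\<epsilon>. 0 < \<epsilon> \<and> \<epsilon> < \<epsilon>' \<longrightarrow> (\<forall>x0 \<in> ball y0 \<delta>' \<inter> D.
              \<bar>walk_value D F \<epsilon> x0 - F y0\<bar> \<le> \<eta>))"
proof (intro allI impI)
  fix \<eta> :: real assume "\<eta> > 0"
  interpret P: prob_space "walk_space :: (nat \<Rightarrow> 'a) measure" by (rule walk_space_prob)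
  have "frontier D \<subseteq> closure D" by (auto simp: frontier_def)
  then have "bounded (frontier D)" using bounded_subset bounded_closure assms(2) by blast
  then have cpt: "compact (frontier D)" by (simp add: compact_eq_bounded_closed)
  have "bounded (F ` frontier D)"
    by (rule compact_imp_bounded, rule compact_continuous_image[OF assms(6) cpt])
  then obtain B where B: "\<And>y. y \<in> frontier D \<Longrightarrow> \<bar>F y\<bar> \<le> B"
    by (auto simp: bounded_iff)
  define M where "M = max B 0"
  have M0: "M \<ge> 0" and MB: "\<And>y. y \<in> frontier D \<Longrightarrow> \<bar>F y\<bar> \<le> M"
    using B by (auto simp: M_def) (meson max.coboundedI1)
  obtain d where d0: "d > 0" and d: "\<And>y. y \<in> frontier D \<Longrightarrow> dist y y0 < d \<Longrightarrow> dist (F y) (F y0) < \<eta>/2"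
    using assms(6) assms(4) \<open>\<eta> > 0\<close> unfolding continuous_on_iff
    by (metis half_gt_zero)
  define \<eta>' where "\<eta>' = \<eta> / (4*M+2)"
  have \<eta>'0: "\<eta>' > 0" using \<open>\<eta> > 0\<close> M0 by (simp add: \<eta>'_def)
  have \<eta>'M: "2*M*\<eta>' \<le> \<eta>/2"
  proof -
    have "2*M*\<eta>' = \<eta> * (2*M) / (4*M+2)" by (simp add: \<eta>'_def)
    also have "\<dots> \<le> \<eta>/2" using M0 \<open>\<eta> > 0\<close> by (simp add: field_simps)
    finally show ?thesis .
  qed
  obtain \<delta>' \<epsilon>' where \<delta>'0: "0 < \<delta>'" and \<epsilon>'0: "0 < \<epsilon>'" "\<epsilon>' < 1" and reg:
    "\<And>\<epsilon> x0. 0 < \<epsilon> \<Longrightarrow> \<epsilon> < \<epsilon>' \<Longrightarrow> x0 \<in> ball y0 \<delta>' \<inter> D \<Longrightarrow>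
       measure walk_space {\<omega> \<in> space walk_space. walk_limit D \<epsilon> x0 \<omega> \<in> ball y0 d} \<ge> 1 - \<eta>'"
  proof -
    from assms(5)[unfolded walk_regular_def, rule_format, OF \<eta>'0 d0]
    obtain a b where "0 < a" "0 < b" "b < 1" and r: "\<forall>\<epsilon>. 0 < \<epsilon> \<and> \<epsilon> < b \<longrightarrow> (\<forall>x0 \<in> ball y0 a \<inter> D.
           measure walk_space {\<omega> \<in> space walk_space. walk_limit D \<epsilon> x0 \<omega> \<in> ball y0 d} \<ge> 1 - \<eta>')"
      by auto
    show ?thesis by (rule that[OF \<open>0 < a\<close> \<open>0 < b\<close> \<open>b < 1\<close>]) (use r in auto)
  qed
  show "\<exists>\<delta>'>0. \<exists>\<epsilon>'. 0 < \<epsilon>' \<and> \<epsilon>' < 1 \<and>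
           (\<forall>\<epsilon>. 0 < \<epsilon> \<and> \<epsilon> < \<epsilon>' \<longrightarrow> (\<forall>x0 \<in> ball y0 \<delta>' \<inter> D.
              \<bar>walk_value D F \<epsilon> x0 - F y0\<bar> \<le> \<eta>))"
  proof (intro exI conjI allI impI ballI)
    show "0 < \<delta>'" "0 < \<epsilon>'" "\<epsilon>' < 1" by fact+
    fix \<epsilon> x0 assume \<epsilon>: "0 < \<epsilon> \<and> \<epsilon> < \<epsilon>'" and x0: "x0 \<in> ball y0 \<delta>' \<inter> D"
    let ?X = "walk_limit D \<epsilon> x0"
    define A where "A = {\<omega> \<in> space walk_space. ?X \<omega> \<in> ball y0 d}"
    have XF: "\<And>\<omega>. ?X \<omega> \<in> frontier D" using limit_in_frontier[OF assms(4)] .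
    have Xm: "?X \<in> borel_measurable walk_space" by (rule limit_meas)
    have A: "A \<in> sets walk_space"
      unfolding A_def using measurable_sets[OF Xm, of "ball y0 d"] by (simp add: vimage_def Int_def conj_commute)
    have PA: "measure walk_space A \<ge> 1 - \<eta>'" using reg[of \<epsilon> x0] \<epsilon> x0 by (simp add: A_def)
    have Gm: "(\<lambda>y. indicator (frontier D) y *\<^sub>R F y) \<in> borel_measurable borel"
      by (rule borel_measurable_continuous_on_indicator) (auto intro: assms(6))
    have gm: "(\<lambda>\<omega>. F (?X \<omega>)) \<in> borel_measurable walk_space"
    proof -
      have "(\<lambda>\<omega>. indicator (frontier D) (?X \<omega>) *\<^sub>R F (?X \<omega>)) \<in> borel_measurable walk_space"
        using measurable_compose[OF Xm Gm] by simp
      then show ?thesis using XF by simp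
    qed
    have gi: "integrable walk_space (\<lambda>\<omega>. F (?X \<omega>))"
      by (rule P.integrable_const_bound[where B=M]) (use gm MB XF in auto)
    have fin: "emeasure walk_space (space walk_space - A) < \<top>"
      by (simp add: P.emeasure_eq_measure)
    have i1: "integrable walk_space (\<lambda>\<omega>. indicator (space walk_space - A) \<omega> :: real)"
      using A fin by (auto intro!: integrable_real_indicator)
    have hi: "integrable walk_space (\<lambda>\<omega>. \<eta>/2 + 2*M * indicator (space walk_space - A) \<omega>)"
      using i1 by (intro Bochner_Integration.integrable_add integrable_mult_right) auto
    have hint: "(\<integral>\<omega>. (\<eta>/2 + 2*M * indicator (space walk_space - A) \<omega>) \<partial>(walk_space :: (nat \<Rightarrow> 'a) measure))
        = \<eta>/2 + 2*M * measure walk_space (space walk_space - A)"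
    proof -
      have "(\<integral>\<omega>. (\<eta>/2 + 2*M * indicator (space walk_space - A) \<omega>) \<partial>(walk_space :: (nat \<Rightarrow> 'a) measure))
         = (\<integral>\<omega>. \<eta>/2 \<partial>(walk_space :: (nat \<Rightarrow> 'a) measure)) + (\<integral>\<omega>. 2*M * indicator (space walk_space - A) \<omega> \<partial>(walk_space :: (nat \<Rightarrow> 'a) measure))"
        by (rule Bochner_Integration.integral_add) (use i1 in auto)
      also have "\<dots> = \<eta>/2 + 2*M * measure walk_space (space walk_space - A)"
        using A fin by (simp add: P.prob_space)
      finally show ?thesis .
    qed
    have "\<bar>walk_value D F \<epsilon> x0 - F y0\<bar> = \<bar>\<integral>\<omega>. (F (?X \<omega>) - F y0) \<partial>walk_space\<bar>"
      unfolding walk_value_def using gi by (simp add: P.prob_space)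
    also have "\<dots> \<le> \<integral>\<omega>. \<bar>F (?X \<omega>) - F y0\<bar> \<partial>walk_space"
      by (rule integral_abs_bound)
    also have "\<dots> \<le> \<integral>\<omega>. (\<eta>/2 + 2*M * indicator (space walk_space - A) \<omega>) \<partial>walk_space"
    proof (rule integral_mono[OF _ hi])
      show "integrable walk_space (\<lambda>\<omega>. \<bar>F (?X \<omega>) - F y0\<bar>)" using gi by auto
      fix \<omega> :: "nat \<Rightarrow> 'a" assume \<omega>: "\<omega> \<in> space walk_space"
      show "\<bar>F (?X \<omega>) - F y0\<bar> \<le> \<eta>/2 + 2*M * indicator (space walk_space - A) \<omega>"
      proof (cases "\<omega> \<in> A")
        case True
        then have "dist (?X \<omega>) y0 < d" by (simp add: A_def dist_commute)
        then have "dist (F (?X \<omega>)) (F y0) < \<eta>/2" using d XF by blast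
        then show ?thesis using M0 True by (simp add: dist_real_def indicator_def)
        next
        case False
        have "\<bar>F (?X \<omega>) - F y0\<bar> \<le> 2*M" using MB[OF XF[of \<omega>]] MB[OF assms(4)] by linarith
        then show ?thesis using False \<omega> \<open>\<eta> > 0\<close> by simp
      qed
    qed
    also have "\<dots> = \<eta>/2 + 2*M * measure walk_space (space walk_space - A)"
      by (rule hint)
    also have "\<dots> = \<eta>/2 + 2*M * (1 - measure walk_space A)"
      using P.prob_compl[OF A] by simp
    also have "\<dots> \<le> \<eta>/2 + 2*M*\<eta>'"
      using PA M0 by (simp add: mult_left_mono)
    also have "\<dots> \<le> \<eta>" using \<eta>'M by simp
    finally show "\<bar>walk_value D F \<epsilon> x0 - F y0\<bar> \<le> \<eta>" .
  qed
qed

end
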